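(* Let $(N_0,c,w,P)$ be an RS-situation and $(N_0,v)$ the corresponding RS-game. Then $x\in Core(N_0,v)$ if and only if there exists $w^*=(w_i^* )_{i\in N}\in\mathbb{R}^n$ with $w_i^*\ge c$ for all $i\in N$ and $\sum_{i\in S}\Pi_i^{ret}(q_i^c;w_i^* )\ge v(S)$ for all nonempty $S\subseteq N$, such that \[x_0=\sum_{i\in N}\Pi_i^{sup}(q_i^c;w_i^* )\quad\text{and}\quad x_i=\Pi_i^{ret}(q_i^c;w_i^* )\ \text{ for } i\in N.\]
   Context: Let $c\in\mathbb{R}$. An RS-problem is a triple $(c,w,p)$ where $w:\mathbb{R}_+\to(c,+\infty)$ is decreasing (non-increasing) and continuous, and $p:\mathbb{R}_+\to\mathbb{R}$ is decreasing (non-increasing) and continuous, satisfies $p(0)>w(0)$, and there exists $q>0$ with $p(q)=c$. An RS-situation is a tuple $(N_0,c,w,P)$ where $N=\{1,\dots,n\}$ is the set of retailers, $0$ denotes the supplier, $N_0=N\cup\{0\}$, $P=(p_1,\dots,p_n)$, and $(c,w,p_i)$ is an RS-problem for each $i\in N$. For $S\subseteq N$ write $S_0=S\cup\{0\}$. For $q\ge0$ and $\omega\in\mathbb{R}$, $\Pi_i^{ret}(q;\omega)=(p_i(q)-\omega)q$ and $\Pi_i^{sup}(q;\omega)=(\omega-c)q$. For nonempty $S\subseteq N$, $(q_i^S)_{i\in S}$ is a fixed optimal solution of: maximize $\sum_{i\in S}(p_i(q_i)-w(q_S))q_i$ over $q\in\mathbb{R}_+^{S}$ subject to $p_i(q_i)\ge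 w(q_S)$ for all $i\in S$, where $q_S=\sum_{i\in S}q_i$; $q_S^S=\sum_{i\in S}q_i^S$. For $i\in N$, $q_i^c$ is a fixed optimal solution of: maximize $(p_i(q)-c)q$ over $q\ge0$ subject to $p_i(q)\ge c$. The corresponding RS-game $(N_0,v)$ is the TU game on $N_0$ with $v(\emptyset)=0$ and, for all $S\subseteq N$, $v(S)=\sum_{i\in S}\Pi_i^{ret}(q_i^S;w(q_S^S))$ and $v(S_0)=\sum_{i\in S}\Pi_i^{ret}(q_i^c;c)$. The core is $Core(N_0,v)=\{x\in\mathbb{R}^{N_0}: \sum_{i\in N_0}x_i=v(N_0),\ \sum_{i\in T}x_i\ge v(T)\text{ for all }T\subset N_0\}$. *)

theory Defs
  imports Complex_Main
begin

definition decr_on_nonneg :: "(real \<Rightarrow> real) \<Rightarrow> bool" where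
  "decr_on_nonneg f \<longleftrightarrow> (\<forall>x y. 0 \<le> x \<longrightarrow> x \<le> y \<longrightarrow> f y \<le> f x)"

definition rs_problem :: "real \<Rightarrow> (real \<Rightarrow> real) \<Rightarrow> (real \<Rightarrow> real) \<Rightarrow> bool" where
  "rs_problem c w p \<longleftrightarrow>
     (\<forall>x\<ge>0. c < w x) \<and> decr_on_nonneg w \<and> continuous_on {0..} w \<and>
     decr_on_nonneg p \<and> continuous_on {0..} p \<and> w 0 < p 0 \<and>
     (\<exists>q>0. p q = c)"

text \<open>Retailers are 1..n, supplier is 0; p i is the price function of retailer i.\<close>
definition rs_situation :: "nat \<Rightarrow> real \<Rightarrow> (real \<Rightarrow> real) \<Rightarrow> (nat \<Rightarrow> real \<Rightarrow> real) \<Rightarrow> bool" where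
  "rs_situation n c w P \<longleftrightarrow> (\<forall>i\<in>{1..n}. rs_problem c w (P i))"

definition Pi_ret :: "(real \<Rightarrow> real) \<Rightarrow> real \<Rightarrow> real \<Rightarrow> real" where
  "Pi_ret p q \<omega> = (p q - \<omega>) * q"

definition Pi_sup :: "real \<Rightarrow> real \<Rightarrow> real \<Rightarrow> real" where
  "Pi_sup c q \<omega> = (\<omega> - c) * q"

definition coal_feasible :: "(real \<Rightarrow> real) \<Rightarrow> (nat \<Rightarrow> real \<Rightarrow> real) \<Rightarrow> nat set \<Rightarrow> (nat \<Rightarrow> real) \<Rightarrow> bool" where
  "coal_feasible w P S q \<longleftrightarrow>
     (\<forall>i\<in>S. 0 \<le> q i) \<and> (\<forall>i\<in>S. w (\<Sum>j\<in>S. q j) \<le> P i (q i))"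

definition coal_obj :: "(real \<Rightarrow> real) \<Rightarrow> (nat \<Rightarrow> real \<Rightarrow> real) \<Rightarrow> nat set \<Rightarrow> (nat \<Rightarrow> real) \<Rightarrow> real" where
  "coal_obj w P S q = (\<Sum>i\<in>S. (P i (q i) - w (\<Sum>j\<in>S. q j)) * q i)"

definition coal_optimal :: "(real \<Rightarrow> real) \<Rightarrow> (nat \<Rightarrow> real \<Rightarrow> real) \<Rightarrow> nat set \<Rightarrow> (nat \<Rightarrow> real) \<Rightarrow> bool" where
  "coal_optimal w P S q \<longleftrightarrow> coal_feasible w P S q \<and>
     (\<forall>q'. coal_feasible w P S q' \<longrightarrow> coal_obj w P S q' \<le> coal_obj w P S q)"

definition central_optimal :: "real \<Rightarrow> (real \<Rightarrow> real) \<Rightarrow> real \<Rightarrow> bool" where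
  "central_optimal c p q \<longleftrightarrow> 0 \<le> q \<and> c \<le> p q \<and>
     (\<forall>q'. 0 \<le> q' \<longrightarrow> c \<le> p q' \<longrightarrow> (p q' - c) * q' \<le> (p q - c) * q)"

text \<open>The RS-game on players {0..n}; qS S is the fixed optimal solution for coalition S,
  qc i the fixed optimal solution of the centralized problem of retailer i.\<close>
definition rs_game :: "real \<Rightarrow> (real \<Rightarrow> real) \<Rightarrow> (nat \<Rightarrow> real \<Rightarrow> real) \<Rightarrow>
    (nat set \<Rightarrow> nat \<Rightarrow> real) \<Rightarrow> (nat \<Rightarrow> real) \<Rightarrow> nat set \<Rightarrow> real" where
  "rs_game c w P qS qc T =
     (if T = {} then 0
      else if 0 \<in> T then (\<Sum>i\<in>T - {0}. Pi_ret (P i) (qc i) c)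
      else (\<Sum>i\<in>T. Pi_ret (P i) (qS T i) (w (\<Sum>j\<in>T. qS T j))))"

definition core :: "nat set \<Rightarrow> (nat set \<Rightarrow> real) \<Rightarrow> (nat \<Rightarrow> real) set" where
  "core N0 v = {x. (\<Sum>i\<in>N0. x i) = v N0 \<and> (\<forall>T. T \<subset> N0 \<longrightarrow> v T \<le> (\<Sum>i\<in>T. x i))}"

end

theory Submission
  imports Defs "HOL-Analysis.Analysis"
begin

lemma qc_pos:
  assumes "rs_problem c w p" and "central_optimal c p q"
  shows "0 < q"
proof -
  have c0: "c < p 0" using assms(1) unfolding rs_problem_def by force
  have cont: "continuous_on {0..} p" using assms(1) unfolding rs_problem_def by blast
  then obtain d where d: "d > 0" and hd: "\<forall>x'\<in>{0..}. dist x' 0 < d \<longrightarrow> dist (p x') (p 0) < p 0 - c"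
    unfolding continuous_on_iff using c0 by (metis atLeast_iff diff_gt_0_iff_gt order_refl)
  have "dist (p (d/2)) (p 0) < p 0 - c" using hd d by (simp add: dist_real_def)
  hence pd: "p (d/2) > c" by (simp add: dist_real_def abs_less_iff)
  have "(p (d/2) - c) * (d/2) \<le> (p q - c) * q" using assms(2) pd d unfolding central_optimal_def
    by (metis less_eq_real_def half_gt_zero)
  moreover have "(p (d/2) - c) * (d/2) > 0" using pd d by simp
  moreover have "q \<ge> 0" using assms(2) unfolding central_optimal_def by simp
  ultimately show ?thesis by (cases "q = 0") auto
qed

theorem theorem5p6:
  fixes n :: nat and c :: real and w :: "real \<Rightarrow> real" and P :: "nat \<Rightarrow> real \<Rightarrow> real"
    and qS :: "nat set \<Rightarrow> nat \<Rightarrow> real" and qc :: "nat \<Rightarrow> real" and x :: "nat \<Rightarrow> real"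
  assumes sit: "rs_situation n c w P"
    and qS_opt: "\<And>S. S \<subseteq> {1..n} \<Longrightarrow> S \<noteq> {} \<Longrightarrow> coal_optimal w P S (qS S)"
    and qc_opt: "\<And>i. i \<in> {1..n} \<Longrightarrow> central_optimal c (P i) (qc i)"
  shows "x \<in> core {0..n} (rs_game c w P qS qc) \<longleftrightarrow>
    (\<exists>wst :: nat \<Rightarrow> real.
        (\<forall>i\<in>{1..n}. c \<le> wst i) \<and>
        (\<forall>S. S \<subseteq> {1..n} \<longrightarrow> S \<noteq> {} \<longrightarrow>
              rs_game c w P qS qc S \<le> (\<Sum>i\<in>S. Pi_ret (P i) (qc i) (wst i))) \<and>
        x 0 = (\<Sum>i\<in>{1..n}. Pi_sup c (qc i) (wst i)) \<and>
        (\<forall>i\<in>{1..n}. x i = Pi_ret (P i) (qc i) (wst i)))"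
proof -
  define v where "v = rs_game c w P qS qc"
  have qpos: "\<And>i. i \<in> {1..n} \<Longrightarrow> 0 < qc i"
    using qc_pos qc_opt sit unfolding rs_situation_def by blast
  have N0: "{0..n} = insert 0 {1..n}" by auto
  have vN0: "v {0..n} = (\<Sum>i\<in>{1..n}. Pi_ret (P i) (qc i) c)"
    unfolding v_def rs_game_def by (simp add: N0)
  have sumN0: "\<And>f. (\<Sum>i\<in>{0..n}. f i) = f 0 + (\<Sum>i\<in>{1..n}. f i)"
    by (simp add: N0)
  have vS0: "\<And>S. S \<subseteq> {1..n} \<Longrightarrow> v (insert 0 S) = (\<Sum>i\<in>S. Pi_ret (P i) (qc i) c)"
    unfolding v_def rs_game_def
    by (simp, rule sum.cong, auto)
  show ?thesis
  proof
    assume xc: "x \<in> core {0..n} (rs_game c w P qS qc)"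
    hence tot: "(\<Sum>i\<in>{0..n}. x i) = v {0..n}" and cr: "\<And>T. T \<subset> {0..n} \<Longrightarrow> v T \<le> (\<Sum>i\<in>T. x i)"
      unfolding core_def v_def by auto
    define wst where "wst i = P i (qc i) - x i / qc i" for i
    have xi: "\<forall>i\<in>{1..n}. x i = Pi_ret (P i) (qc i) (wst i)"
    proof
      fix i assume i: "i \<in> {1..n}"
      have "qc i \<noteq> 0" using qpos[OF i] by simp
      thus "x i = Pi_ret (P i) (qc i) (wst i)" unfolding wst_def Pi_ret_def by (simp add: field_simps)
    qed
    have wc: "\<forall>i\<in>{1..n}. c \<le> wst i"
    proof
      fix i assume i: "i \<in> {1..n}"
      have sub: "{1..n} - {i} \<subseteq> {1..n}" by auto
      have "i \<notin> insert 0 ({1..n} - {i})" "i \<in> {0..n}" "insert 0 ({1..n} - {i}) \<subseteq> {0..n}" using i by auto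
      hence "insert 0 ({1..n} - {i}) \<subset> {0..n}" by blast
      hence "v (insert 0 ({1..n} - {i})) \<le> (\<Sum>j\<in>insert 0 ({1..n} - {i}). x j)" by (rule cr)
      hence "(\<Sum>j\<in>{1..n} - {i}. Pi_ret (P j) (qc j) c) \<le> x 0 + (\<Sum>j\<in>{1..n} - {i}. x j)"
        using vS0[OF sub] by simp
      moreover have "(\<Sum>j\<in>{1..n}. Pi_ret (P j) (qc j) c) = Pi_ret (P i) (qc i) c + (\<Sum>j\<in>{1..n} - {i}. Pi_ret (P j) (qc j) c)"
        using i by (simp add: sum.remove)
      moreover have "(\<Sum>j\<in>{1..n}. x j) = x i + (\<Sum>j\<in>{1..n} - {i}. x j)"
        using i by (simp add: sum.remove)
      ultimately have "x i \<le> Pi_ret (P i) (qc i) c" using tot vN0 sumN0[of x] by linarith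
      hence "(P i (qc i) - wst i) * qc i \<le> (P i (qc i) - c) * qc i"
        using xi i unfolding Pi_ret_def by simp
      thus "c \<le> wst i" using qpos[OF i] by simp
    qed
    have x0: "x 0 = (\<Sum>i\<in>{1..n}. Pi_sup c (qc i) (wst i))"
    proof -
      have "x 0 = (\<Sum>i\<in>{1..n}. Pi_ret (P i) (qc i) c) - (\<Sum>i\<in>{1..n}. x i)"
        using tot vN0 sumN0[of x] by linarith
      also have "\<dots> = (\<Sum>i\<in>{1..n}. Pi_ret (P i) (qc i) c - x i)" by (simp add: sum_subtractf)
      also have "\<dots> = (\<Sum>i\<in>{1..n}. Pi_sup c (qc i) (wst i))"
        using xi by (intro sum.cong) (auto simp: Pi_ret_def Pi_sup_def algebra_simps)
      finally show ?thesis .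
    qed
    have sc: "\<forall>S. S \<subseteq> {1..n} \<longrightarrow> S \<noteq> {} \<longrightarrow>
              rs_game c w P qS qc S \<le> (\<Sum>i\<in>S. Pi_ret (P i) (qc i) (wst i))"
    proof (intro allI impI)
      fix S assume S: "S \<subseteq> {1..n}" "S \<noteq> {}"
      have "S \<subset> {0..n}" using S by auto
      hence "v S \<le> (\<Sum>i\<in>S. x i)" by (rule cr)
      also have "\<dots> = (\<Sum>i\<in>S. Pi_ret (P i) (qc i) (wst i))"
        using xi S by (intro sum.cong) auto
      finally show "rs_game c w P qS qc S \<le> (\<Sum>i\<in>S. Pi_ret (P i) (qc i) (wst i))" unfolding v_def .
    qed
    show "\<exists>wst. (\<forall>i\<in>{1..n}. c \<le> wst i) \<and>
        (\<forall>S. S \<subseteq> {1..n} \<longrightarrow> S \<noteq> {} \<longrightarrow>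
              rs_game c w P qS qc S \<le> (\<Sum>i\<in>S. Pi_ret (P i) (qc i) (wst i))) \<and>
        x 0 = (\<Sum>i\<in>{1..n}. Pi_sup c (qc i) (wst i)) \<and>
        (\<forall>i\<in>{1..n}. x i = Pi_ret (P i) (qc i) (wst i))"
      using wc sc x0 xi by blast
  next
    assume "\<exists>wst. (\<forall>i\<in>{1..n}. c \<le> wst i) \<and>
        (\<forall>S. S \<subseteq> {1..n} \<longrightarrow> S \<noteq> {} \<longrightarrow>
              rs_game c w P qS qc S \<le> (\<Sum>i\<in>S. Pi_ret (P i) (qc i) (wst i))) \<and>
        x 0 = (\<Sum>i\<in>{1..n}. Pi_sup c (qc i) (wst i)) \<and>
        (\<forall>i\<in>{1..n}. x i = Pi_ret (P i) (qc i) (wst i))"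
    then obtain wst where wc: "\<forall>i\<in>{1..n}. c \<le> wst i"
      and sc: "\<forall>S. S \<subseteq> {1..n} \<longrightarrow> S \<noteq> {} \<longrightarrow> v S \<le> (\<Sum>i\<in>S. Pi_ret (P i) (qc i) (wst i))"
      and x0: "x 0 = (\<Sum>i\<in>{1..n}. Pi_sup c (qc i) (wst i))"
      and xi: "\<forall>i\<in>{1..n}. x i = Pi_ret (P i) (qc i) (wst i)" unfolding v_def by blast
    have split: "\<And>S. S \<subseteq> {1..n} \<Longrightarrow> x 0 + (\<Sum>i\<in>S. x i) =
        (\<Sum>i\<in>S. Pi_ret (P i) (qc i) c) + (\<Sum>i\<in>{1..n} - S. Pi_sup c (qc i) (wst i))"
    proof -
      fix S assume S: "S \<subseteq> {1..n}"
      have "x 0 = (\<Sum>i\<in>S. Pi_sup c (qc i) (wst i)) + (\<Sum>i\<in>{1..n} - S. Pi_sup c (qc i) (wst i))"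
        using x0 S by (metis add.commute finite_atLeastAtMost sum.subset_diff)
      moreover have "(\<Sum>i\<in>S. x i) = (\<Sum>i\<in>S. Pi_ret (P i) (qc i) (wst i))"
        using xi S by (intro sum.cong) auto
      moreover have "(\<Sum>i\<in>S. Pi_sup c (qc i) (wst i)) + (\<Sum>i\<in>S. Pi_ret (P i) (qc i) (wst i))
          = (\<Sum>i\<in>S. Pi_ret (P i) (qc i) c)"
        by (simp add: sum.distrib[symmetric] Pi_ret_def Pi_sup_def algebra_simps)
      ultimately show "x 0 + (\<Sum>i\<in>S. x i) =
        (\<Sum>i\<in>S. Pi_ret (P i) (qc i) c) + (\<Sum>i\<in>{1..n} - S. Pi_sup c (qc i) (wst i))" by linarith
    qed
    have nonneg: "\<And>S. S \<subseteq> {1..n} \<Longrightarrow> 0 \<le> (\<Sum>i\<in>{1..n} - S. Pi_sup c (qc i) (wst i))"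
      using wc qpos unfolding Pi_sup_def by (intro sum_nonneg) (simp add: less_imp_le)
    have tot: "(\<Sum>i\<in>{0..n}. x i) = v {0..n}"
      using split[of "{1..n}"] sumN0[of x] vN0 by simp
    have cr: "v T \<le> (\<Sum>i\<in>T. x i)" if T: "T \<subset> {0..n}" for T
    proof (cases "0 \<in> T")
      case True
      define S where "S = T - {0}"
      have S: "S \<subseteq> {1..n}" using T unfolding S_def by auto
      have TS: "T = insert 0 S" using True S_def by auto
      have "(\<Sum>i\<in>T. x i) = x 0 + (\<Sum>i\<in>S. x i)"
        using True S finite_subset[OF S] unfolding S_def by (simp add: sum.remove)
      moreover have "v T = (\<Sum>i\<in>S. Pi_ret (P i) (qc i) c)" using vS0[OF S] TS by simp
      ultimately show ?thesis using split[OF S] nonneg[OF S] by linarith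
    next
      case False
      have "T \<subseteq> {0..n}" using T by blast
      hence S: "T \<subseteq> {1..n}" using False by (auto simp: subset_eq Suc_le_eq) (metis atLeastAtMost_iff gr0I)
      show ?thesis
      proof (cases "T = {}")
        case True then show ?thesis unfolding v_def rs_game_def by simp
      next
        case False
        have "v T \<le> (\<Sum>i\<in>T. Pi_ret (P i) (qc i) (wst i))" using sc S False by blast
        also have "\<dots> = (\<Sum>i\<in>T. x i)" using xi S by (intro sum.cong) auto
        finally show ?thesis .
      qed
    qed
    show "x \<in> core {0..n} (rs_game c w P qS qc)"
      unfolding core_def using tot cr unfolding v_def by blast
  qed
qed

end
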